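(* Let $\mathfrak A,\mathfrak B$ be $L$-algebras and $H:\mathfrak A\to\mathfrak B$ an isomorphism. Then for all $a,b,c,d\in A$, $$a:b::_{\mathfrak A}c:d\iff Ha:Hb::_{\mathfrak B}Hc:Hd,$$ i.e. $H$ is a proportional homomorphism.
   Context: $L$ is a language of algebras (constants are $0$-ary function symbols), $X$ a denumerable set of variables, $T_{L,X}$ the $L$-terms, $X(s)$ the variables of $s$, $s^{\mathfrak A}$ the induced term function. A justification is a pair $s\to t$ of terms with $X(t)\subseteq X(s)$. $\uparrow_{\mathfrak A}(a\to b)$ is the set of justifications $s\to t$ with $a=s^{\mathfrak A}(\mathbf o)$, $b=t^{\mathfrak A}(\mathbf o)$ for some tuple $\mathbf o$ over $A$; $\uparrow_{(\mathfrak A,\mathfrak B)}(a\to b:\!\cdot\,c\to d):=\uparrow_{\mathfrak A}(a\to b)\cap\uparrow_{\mathfrak B}(c\to d)$. A justification is trivial in $(\mathfrak A,\mathfrak B)$ if it lies in $\uparrow_{(\mathfrak A,\mathfrak B)}(a'\to b':\!\cdot\,c'\to d')$ for all $a',b'\in A,c',d'\in B$. The arrow proportion $a\to b:\!\cdot\,c\to d$ holds in $(\mathfrak A,\mathfrak B)$ iff either (i) all justifications in $\uparrow_{\mathfrak A}(a\to b)\cup\uparrow_{\mathfrak B}(c\to d)$ are trivial, or (ii) $J_d:=\uparrow_{(\mathfrak A,\mathfrak B)}(a\to b:\!\cdot\,c\to d)$ contains a non-trivial justification and for every $d'\in B$, $J_d\subseteq J_{d'}$ implies that $J_{d'}$ contains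 a non-trivial justification and $J_{d'}\subseteq J_d$ (inclusions ignoring trivial justifications). Then $a:b::_{(\mathfrak A,\mathfrak B)}c:d$ iff $a\to b:\!\cdot\,c\to d$ and $b\to a:\!\cdot\,d\to c$ hold in $(\mathfrak A,\mathfrak B)$ and $c\to d:\!\cdot\,a\to b$ and $d\to c:\!\cdot\,b\to a$ hold in $(\mathfrak B,\mathfrak A)$. We write $::_{\mathfrak A}$ for $::_{(\mathfrak A,\mathfrak A)}$. *)

theory Defs
  imports Main
begin

text \<open>A language L is given by a type 'f of function symbols with an arity map
  ar :: 'f => nat (constants have arity 0). Variables are natural numbers (a denumerable set X).\<close>

datatype ('f, 'v) trm = Var 'v | Fun 'f "('f, 'v) trm list"

type_synonym 'f lterm = "('f, nat) trm"

fun wf_term :: "('f \<Rightarrow> nat) \<Rightarrow> ('f, 'v) trm \<Rightarrow> bool" where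
  "wf_term ar (Var x) = True"
| "wf_term ar (Fun f ts) = (length ts = ar f \<and> (\<forall>t\<in>set ts. wf_term ar t))"

primrec vars :: "('f, 'v) trm \<Rightarrow> 'v set" where
  "vars (Var x) = {x}"
| "vars (Fun f ts) = \<Union> (set (map vars ts))"

primrec eval :: "('f \<Rightarrow> 'a list \<Rightarrow> 'a) \<Rightarrow> ('v \<Rightarrow> 'a) \<Rightarrow> ('f, 'v) trm \<Rightarrow> 'a" where
  "eval I \<sigma> (Var x) = \<sigma> x"
| "eval I \<sigma> (Fun f ts) = I f (map (eval I \<sigma>) ts)"

definition algebra :: "('f \<Rightarrow> nat) \<Rightarrow> 'a set \<Rightarrow> ('f \<Rightarrow> 'a list \<Rightarrow> 'a) \<Rightarrow> bool" where
  "algebra ar A I \<longleftrightarrow> (\<forall>f xs. length xs = ar f \<and> set xs \<subseteq> A \<longrightarrow> I f xs \<in> A)"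

definition isomorphism :: "('f \<Rightarrow> nat) \<Rightarrow> 'a set \<Rightarrow> ('f \<Rightarrow> 'a list \<Rightarrow> 'a)
    \<Rightarrow> 'b set \<Rightarrow> ('f \<Rightarrow> 'b list \<Rightarrow> 'b) \<Rightarrow> ('a \<Rightarrow> 'b) \<Rightarrow> bool" where
  "isomorphism ar A IA B IB H \<longleftrightarrow> bij_betw H A B \<and>
     (\<forall>f xs. length xs = ar f \<and> set xs \<subseteq> A \<longrightarrow> H (IA f xs) = IB f (map H xs))"

definition justification :: "('f \<Rightarrow> nat) \<Rightarrow> 'f lterm \<Rightarrow> 'f lterm \<Rightarrow> bool" where
  "justification ar s t \<longleftrightarrow> wf_term ar s \<and> wf_term ar t \<and> vars t \<subseteq> vars s"

definition up :: "('f \<Rightarrow> nat) \<Rightarrow> 'a set \<Rightarrow> ('f \<Rightarrow> 'a list \<Rightarrow> 'a) \<Rightarrow> 'a \<Rightarrow> 'a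
    \<Rightarrow> ('f lterm \<times> 'f lterm) set" where
  "up ar A I a b = {(s, t). justification ar s t \<and>
     (\<exists>\<sigma>. (\<forall>x. \<sigma> x \<in> A) \<and> a = eval I \<sigma> s \<and> b = eval I \<sigma> t)}"

definition up2 :: "('f \<Rightarrow> nat) \<Rightarrow> 'a set \<Rightarrow> ('f \<Rightarrow> 'a list \<Rightarrow> 'a) \<Rightarrow> 'b set \<Rightarrow> ('f \<Rightarrow> 'b list \<Rightarrow> 'b)
    \<Rightarrow> 'a \<Rightarrow> 'a \<Rightarrow> 'b \<Rightarrow> 'b \<Rightarrow> ('f lterm \<times> 'f lterm) set" where
  "up2 ar A IA B IB a b c d = up ar A IA a b \<inter> up ar B IB c d"

definition trivial :: "('f \<Rightarrow> nat) \<Rightarrow> 'a set \<Rightarrow> ('f \<Rightarrow> 'a list \<Rightarrow> 'a) \<Rightarrow> 'b set \<Rightarrow> ('f \<Rightarrow> 'b list \<Rightarrow> 'b)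
    \<Rightarrow> ('f lterm \<times> 'f lterm) set" where
  "trivial ar A IA B IB = {J. \<forall>a'\<in>A. \<forall>b'\<in>A. \<forall>c'\<in>B. \<forall>d'\<in>B. J \<in> up2 ar A IA B IB a' b' c' d'}"

definition arrow_prop :: "('f \<Rightarrow> nat) \<Rightarrow> 'a set \<Rightarrow> ('f \<Rightarrow> 'a list \<Rightarrow> 'a) \<Rightarrow> 'b set \<Rightarrow> ('f \<Rightarrow> 'b list \<Rightarrow> 'b)
    \<Rightarrow> 'a \<Rightarrow> 'a \<Rightarrow> 'b \<Rightarrow> 'b \<Rightarrow> bool" where
  "arrow_prop ar A IA B IB a b c d \<longleftrightarrow>
     (let T = trivial ar A IA B IB; J = up2 ar A IA B IB a b in
       (up ar A IA a b \<union> up ar B IB c d \<subseteq> T) \<or>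
       (J c d - T \<noteq> {} \<and>
        (\<forall>d'\<in>B. J c d - T \<subseteq> J c d' - T \<longrightarrow> (J c d' - T \<noteq> {} \<and> J c d' - T \<subseteq> J c d - T))))"

definition analogy :: "('f \<Rightarrow> nat) \<Rightarrow> 'a set \<Rightarrow> ('f \<Rightarrow> 'a list \<Rightarrow> 'a) \<Rightarrow> 'b set \<Rightarrow> ('f \<Rightarrow> 'b list \<Rightarrow> 'b)
    \<Rightarrow> 'a \<Rightarrow> 'a \<Rightarrow> 'b \<Rightarrow> 'b \<Rightarrow> bool" where
  "analogy ar A IA B IB a b c d \<longleftrightarrow>
     arrow_prop ar A IA B IB a b c d \<and> arrow_prop ar A IA B IB b a d c \<and>
     arrow_prop ar B IB A IA c d a b \<and> arrow_prop ar B IB A IA d c b a"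

end

theory Submission
  imports Defs
begin

lemma eval_hom:
  assumes alg: "algebra ar A IA" and iso: "isomorphism ar A IA B IB H"
  shows "wf_term ar s \<Longrightarrow> (\<forall>x. \<sigma> x \<in> A) \<Longrightarrow>
     eval IA \<sigma> s \<in> A \<and> H (eval IA \<sigma> s) = eval IB (H \<circ> \<sigma>) s"
proof (induction s)
  case (Var x)
  then show ?case by simp
next
  case (Fun f ts)
  have h: "\<And>t. t \<in> set ts \<Longrightarrow> eval IA \<sigma> t \<in> A \<and> H (eval IA \<sigma> t) = eval IB (H \<circ> \<sigma>) t"
    using Fun by (auto simp: comp_def)
  have len: "length (map (eval IA \<sigma>) ts) = ar f" using Fun.prems by simp
  have sub: "set (map (eval IA \<sigma>) ts) \<subseteq> A" using h by auto
  have "IA f (map (eval IA \<sigma>) ts) \<in> A" using alg len sub unfolding algebra_def by blast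
  moreover have "H (IA f (map (eval IA \<sigma>) ts)) = IB f (map H (map (eval IA \<sigma>) ts))"
    using iso len sub unfolding isomorphism_def by blast
  moreover have "map H (map (eval IA \<sigma>) ts) = map (eval IB (H \<circ> \<sigma>)) ts"
    using h by auto
  ultimately show ?case by (simp only: eval.simps)
qed

lemma up_eq:
  assumes alg: "algebra ar A IA" and iso: "isomorphism ar A IA B IB H"
    and a: "a \<in> A" and b: "b \<in> A"
  shows "up ar B IB (H a) (H b) = up ar A IA a b"
proof -
  have bij: "bij_betw H A B" using iso unfolding isomorphism_def by blast
  have inj: "inj_on H A" and img: "H ` A = B" using bij unfolding bij_betw_def by auto
  show ?thesis
  proof (rule set_eqI, case_tac x, clarify)
    fix s t
    show "((s, t) \<in> up ar B IB (H a) (H b)) = ((s, t) \<in> up ar A IA a b)"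
    proof
      assume "(s, t) \<in> up ar B IB (H a) (H b)"
      then obtain \<tau> where j: "justification ar s t" and \<tau>: "\<forall>x. \<tau> x \<in> B"
        and e1: "H a = eval IB \<tau> s" and e2: "H b = eval IB \<tau> t"
        unfolding up_def by blast
      define \<sigma> where "\<sigma> = inv_into A H \<circ> \<tau>"
      have \<sigma>A: "\<forall>x. \<sigma> x \<in> A" unfolding \<sigma>_def using \<tau> img by (auto intro: inv_into_into)
      have Hs: "H \<circ> \<sigma> = \<tau>" unfolding \<sigma>_def using \<tau> img by (auto simp: f_inv_into_f)
      have ws: "wf_term ar s" and wt: "wf_term ar t" using j justification_def by auto
      have s1: "eval IA \<sigma> s \<in> A" "H (eval IA \<sigma> s) = H a"
        using eval_hom[OF alg iso ws \<sigma>A] Hs e1 by auto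
      have t1: "eval IA \<sigma> t \<in> A" "H (eval IA \<sigma> t) = H b"
        using eval_hom[OF alg iso wt \<sigma>A] Hs e2 by auto
      have "a = eval IA \<sigma> s" using s1 a inj by (metis inj_on_eq_iff)
      moreover have "b = eval IA \<sigma> t" using t1 b inj by (metis inj_on_eq_iff)
      ultimately show "(s, t) \<in> up ar A IA a b" unfolding up_def using j \<sigma>A by blast
    next
      assume "(s, t) \<in> up ar A IA a b"
      then obtain \<sigma> where j: "justification ar s t" and \<sigma>A: "\<forall>x. \<sigma> x \<in> A"
        and e1: "a = eval IA \<sigma> s" and e2: "b = eval IA \<sigma> t"
        unfolding up_def by blast
      have ws: "wf_term ar s" and wt: "wf_term ar t" using j justification_def by auto
      have "\<forall>x. (H \<circ> \<sigma>) x \<in> B" using \<sigma>A img by auto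
      moreover have "H a = eval IB (H \<circ> \<sigma>) s" using eval_hom[OF alg iso ws \<sigma>A] e1 by simp
      moreover have "H b = eval IB (H \<circ> \<sigma>) t" using eval_hom[OF alg iso wt \<sigma>A] e2 by simp
      ultimately show "(s, t) \<in> up ar B IB (H a) (H b)" unfolding up_def using j by blast
    qed
  qed
qed

theorem mainTheorem3:
  fixes ar :: "'f \<Rightarrow> nat"
    and A :: "'a set" and IA :: "'f \<Rightarrow> 'a list \<Rightarrow> 'a"
    and B :: "'b set" and IB :: "'f \<Rightarrow> 'b list \<Rightarrow> 'b"
    and H :: "'a \<Rightarrow> 'b"
  assumes "algebra ar A IA" and "algebra ar B IB"
    and "isomorphism ar A IA B IB H"
  shows "\<forall>a\<in>A. \<forall>b\<in>A. \<forall>c\<in>A. \<forall>d\<in>A.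
           analogy ar A IA A IA a b c d \<longleftrightarrow> analogy ar B IB B IB (H a) (H b) (H c) (H d)"
proof -
  note U = up_eq[OF assms(1) assms(3)]
  have img: "B = H ` A" using assms(3) unfolding isomorphism_def bij_betw_def by blast
  have "trivial ar B IB B IB = {J. \<forall>a'\<in>H`A. \<forall>b'\<in>H`A. \<forall>c'\<in>H`A. \<forall>d'\<in>H`A.
      J \<in> up ar B IB a' b' \<inter> up ar B IB c' d'}"
    by (simp only: trivial_def up2_def img[symmetric])
  also have "\<dots> = trivial ar A IA A IA"
    unfolding trivial_def up2_def by (simp add: U Ball_image_comp)
  finally have T: "trivial ar B IB B IB = trivial ar A IA A IA" .
  have AP: "arrow_prop ar B IB B IB (H a) (H b) (H c) (H d) = arrow_prop ar A IA A IA a b c d"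
    if "a \<in> A" "b \<in> A" "c \<in> A" "d \<in> A" for a b c d
  proof -
    have "arrow_prop ar B IB B IB (H a) (H b) (H c) (H d) =
      (let T = trivial ar B IB B IB; J = up2 ar B IB B IB (H a) (H b) in
       (up ar B IB (H a) (H b) \<union> up ar B IB (H c) (H d) \<subseteq> T) \<or>
       (J (H c) (H d) - T \<noteq> {} \<and>
        (\<forall>d'\<in>H`A. J (H c) (H d) - T \<subseteq> J (H c) d' - T \<longrightarrow> (J (H c) d' - T \<noteq> {} \<and> J (H c) d' - T \<subseteq> J (H c) (H d) - T))))"
      unfolding arrow_prop_def T[symmetric] Let_def up2_def
      by (simp only: img[symmetric])
    also have "\<dots> = (let T = trivial ar A IA A IA; J = up2 ar A IA A IA a b in
       (up ar A IA a b \<union> up ar A IA c d \<subseteq> T) \<or>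
       (J c d - T \<noteq> {} \<and>
        (\<forall>d'\<in>A. J c d - T \<subseteq> J c d' - T \<longrightarrow> (J c d' - T \<noteq> {} \<and> J c d' - T \<subseteq> J c d - T))))"
      unfolding T Let_def up2_def by (simp add: U that Ball_image_comp)
    finally show ?thesis unfolding arrow_prop_def .
  qed
  show ?thesis unfolding analogy_def by (simp add: AP)
qed

end
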